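(* Let $\lambda_1,\dots,\lambda_n$ be ordinals with $\operatorname{cf}(\lambda_i)\neq\omega$, put $X=\prod_{i=1}^n\lambda_i$, and let $W$ be an open set containing the identity in the colimit space topology on $\operatorname{colim}_{K\in\mathscr K(X)}\operatorname{Homeo}_K(X)$. Then there are $m_1,\dots,m_n\in\mathbb N$ and $\alpha^{(1)}\in X$ such that for every $\alpha=(\alpha_1,\dots,\alpha_n)\in X$ with $\alpha\geq\alpha^{(1)}$ there are sets $F_i^\alpha\subseteq\alpha_i$ with $|F_i^\alpha|=m_i$ and $$U\big(\mathcal G^{\downarrow\alpha}_{\{F_i^\alpha\}_{i=1}^n}\big)\subseteq W\cap\operatorname{Homeo}_{\downarrow\alpha}(X).$$
   Context: Ordinals carry the order topology and $X$ the product topology; $X$ is ordered by the componentwise (product) order, and $\downarrow\alpha=\{\beta\in X\mid\beta\leq\alpha\}=\prod_i[0,\alpha_i]$, a compact open subset. For compact $K\subseteq X$, $\operatorname{Homeo}_K(X)$ is the group of homeomorphisms of $X$ fixing every point outside $K$, with the compact-open topology; $\mathscr K(X)$ is the set of compact subsets ordered by inclusion, and $\operatorname{colim}_K\operatorname{Homeo}_K(X)$ is the union $\bigcup_K\operatorname{Homeo}_K(X)$ with the colimit space topology $\{U\mid U\cap\operatorname{Homeo}_K(X)\text{ open in }\operatorname{Homeo}_K(X)\ \forall K\}$. Grid partitions: for an ordinal $\mu$ and finite $F=\{x_1<\cdots<x_N\}\subseteq\mu$, $\mathcal G^\mu_F=\{[0,x_1]\}\cup\{[x_j+1,x_{j+1}]\mid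 1\leq j<N\}\cup\{[x_N+1,\cdot)\}$ (with $[\alpha,\beta]=\{x\in\mu\mid\alpha\le x\le\beta\}$, $[\alpha,\cdot)=\{x\in\mu\mid x\ge\alpha\}$; $\{\mu\}$ if $F=\emptyset$); for $\downarrow\alpha=\prod_i(\alpha_i+1)$ and finite $F_i\subseteq\alpha_i$, $\mathcal G^{\downarrow\alpha}_{\{F_i\}}=\{\prod_iU_i\mid U_i\in\mathcal G^{\alpha_i+1}_{F_i}\}$. For a finite clopen partition $\mathcal A$ of $\downarrow\alpha$, $U(\mathcal A)$ is the subgroup of those $h\in\operatorname{Homeo}_{\downarrow\alpha}(X)$ with $h(A)=A$ for every $A\in\mathcal A$. *)

theory Defs
  imports "HOL-Analysis.Analysis"
begin

text \<open>Ordinals are modelled inside an arbitrary well-ordered type 'a: the ordinal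
  lambda is the initial segment {..<L} for some L :: 'a.\<close>

definition cofinality_omega :: "'a::wellorder \<Rightarrow> bool" where
  "cofinality_omega L \<longleftrightarrow>
     (\<exists>f :: nat \<Rightarrow> 'a. strict_mono f \<and> (\<forall>k. f k < L) \<and> (\<forall>y. y < L \<longrightarrow> (\<exists>k. y \<le> f k)))"

definition order_top_on :: "'a::linorder set \<Rightarrow> 'a topology" where
  "order_top_on \<mu> = topology_generated_by
     ({\<mu>} \<union> {{x \<in> \<mu>. x < a} | a. a \<in> \<mu>} \<union> {{x \<in> \<mu>. a < x} | a. a \<in> \<mu>})"

definition ord_prod :: "nat \<Rightarrow> (nat \<Rightarrow> 'a::wellorder) \<Rightarrow> (nat \<Rightarrow> 'a) topology" where
  "ord_prod n L = product_topology (\<lambda>i. order_top_on {..<L i}) {..<n}"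

text \<open>Homeo_K(X): homeomorphisms of X fixing every point outside K (maps are taken to be
  the identity outside K, also outside the carrier, so each homeomorphism has a unique
  representative).\<close>
definition Homeo_K :: "'b topology \<Rightarrow> 'b set \<Rightarrow> ('b \<Rightarrow> 'b) set" where
  "Homeo_K X K = {h. homeomorphic_map X X h \<and> (\<forall>x. x \<notin> K \<longrightarrow> h x = x)}"

definition compact_open_top :: "'b topology \<Rightarrow> ('b \<Rightarrow> 'b) set \<Rightarrow> ('b \<Rightarrow> 'b) topology" where
  "compact_open_top X H = topology_generated_by
     ({H} \<union> {{h \<in> H. h ` C \<subseteq> U} | C U. compactin X C \<and> openin X U})"

definition colim_open :: "'b topology \<Rightarrow> ('b \<Rightarrow> 'b) set \<Rightarrow> bool" where
  "colim_open X W \<longleftrightarrow>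
     W \<subseteq> (\<Union>K \<in> {K. compactin X K}. Homeo_K X K) \<and>
     (\<forall>K. compactin X K \<longrightarrow> openin (compact_open_top X (Homeo_K X K)) (W \<inter> Homeo_K X K))"

definition down :: "nat \<Rightarrow> (nat \<Rightarrow> 'a::wellorder) \<Rightarrow> (nat \<Rightarrow> 'a) set" where
  "down n \<alpha> = PiE {..<n} (\<lambda>i. {..\<alpha> i})"

text \<open>Grid partition G^mu_F for finite F = {x_1 < ... < x_N} in mu:
  [0,x_1], [x_j+1, x_{j+1}] = (x_j, x_{j+1}], [x_N+1, .) = (x_N, .).\<close>
definition grid1 :: "'a::wellorder set \<Rightarrow> 'a set \<Rightarrow> 'a set set" where
  "grid1 \<mu> F = (if F = {} then {\<mu>} else
      {{y \<in> \<mu>. y \<le> Min F}}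
    \<union> {{y \<in> \<mu>. x < y \<and> y \<le> x'} | x x'. x \<in> F \<and> x' \<in> F \<and> x < x' \<and> \<not> (\<exists>z \<in> F. x < z \<and> z < x')}
    \<union> {{y \<in> \<mu>. Max F < y}})"

definition grid :: "nat \<Rightarrow> (nat \<Rightarrow> 'a::wellorder) \<Rightarrow> (nat \<Rightarrow> 'a set) \<Rightarrow> (nat \<Rightarrow> 'a) set set" where
  "grid n \<alpha> F = {PiE {..<n} U | U. \<forall>i < n. U i \<in> grid1 {..\<alpha> i} (F i)}"

definition U_part :: "nat \<Rightarrow> (nat \<Rightarrow> 'a::wellorder) \<Rightarrow> (nat \<Rightarrow> 'a) \<Rightarrow> (nat \<Rightarrow> 'a) set set
    \<Rightarrow> ((nat \<Rightarrow> 'a) \<Rightarrow> (nat \<Rightarrow> 'a)) set" where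
  "U_part n L \<alpha> \<A> = {h \<in> Homeo_K (ord_prod n L) (down n \<alpha>). \<forall>A \<in> \<A>. h ` A = A}"

end

theory Submission
  imports Defs
begin

lemma ot_topspace: "topspace (order_top_on {..<(L::'a::wellorder)}) = {..<L}"
  unfolding order_top_on_def topology_generated_by_topspace by auto

definition seg :: "'a::wellorder \<Rightarrow> 'a \<Rightarrow> 'a set \<Rightarrow> 'a set" where
  "seg L x A = {y. y<L \<and> y \<le> x \<and> (\<forall>a\<in>A. a<y)}"

definition nb :: "'a::wellorder \<Rightarrow> 'a set \<Rightarrow> 'a \<Rightarrow> bool" where
  "nb L V x \<longleftrightarrow> (\<exists>A. finite A \<and> (\<forall>a\<in>A. a<x) \<and> seg L x A \<subseteq> V)"

lemma seg_Un: "seg L x (A \<union> B) = seg L x A \<inter> seg L x B"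
  unfolding seg_def by auto

lemma nb_Int: "nb L U x \<Longrightarrow> nb L V x \<Longrightarrow> nb L (U \<inter> V) x"
  unfolding nb_def
proof (elim exE conjE)
  fix A B assume "finite A" "\<forall>a\<in>A. a < x" "seg L x A \<subseteq> U" "finite B" "\<forall>a\<in>B. a < x" "seg L x B \<subseteq> V"
  then show "\<exists>A. finite A \<and> (\<forall>a\<in>A. a < x) \<and> seg L x A \<subseteq> U \<inter> V"
    by (intro exI[of _ "A \<union> B"]) (auto simp: seg_Un)
qed

lemma nb_mono: "nb L U x \<Longrightarrow> U \<subseteq> V \<Longrightarrow> nb L V x"
  unfolding nb_def by (meson order_trans)

lemma ot_nbhd:
  assumes "openin (order_top_on {..<(L::'a::wellorder)}) V" "x \<in> V"
  shows "nb L V x"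
proof -
  have g: "generate_topology_on ({{..<L}} \<union> {{x \<in> {..<L}. x < a} | a. a \<in> {..<L}} \<union> {{x \<in> {..<L}. a < x} | a. a \<in> {..<L}}) V"
    using assms(1) unfolding order_top_on_def by (rule openin_topology_generated_by)
  have "\<forall>x\<in>V. nb L V x"
    using g
  proof (induction rule: generate_topology_on.induct)
    case Empty
    then show ?case by simp
  next
    case (Int a b)
    show ?case
    proof
      fix x assume "x \<in> a \<inter> b"
      then have "nb L a x" "nb L b x" using Int.IH by auto
      then show "nb L (a \<inter> b) x" by (rule nb_Int)
    qed
  next
    case (UN K)
    show ?case
    proof
      fix x assume "x \<in> \<Union>K"
      then obtain k where k: "k \<in> K" "x \<in> k" by blast
      then have "nb L k x" using UN.IH by blast
      then show "nb L (\<Union>K) x" by (rule nb_mono) (use k in blast)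
    qed
  next
    case (Basis s)
    show ?case
    proof
      fix x assume x: "x \<in> s"
      from Basis.hyps consider "s = {..<L}" | c where "s = {x \<in> {..<L}. x < c}" 
        | c where "s = {x \<in> {..<L}. c < x}" unfolding Un_iff mem_Collect_eq singleton_iff by metis
      then show "nb L s x"
      proof cases
        case 1 then show ?thesis unfolding nb_def seg_def by (intro exI[of _ "{}"]) auto
      next
        case (2 c) then show ?thesis using x unfolding nb_def seg_def by (intro exI[of _ "{}"]) auto
      next
        case (3 c) then show ?thesis using x unfolding nb_def seg_def by (intro exI[of _ "{c}"]) auto
      qed
    qed
  qed
  then show ?thesis using assms(2) by blast
qed


lemma ot_open_le:
  assumes "(x::'a::wellorder) < L"
  shows "openin (order_top_on {..<L}) {y. y<L \<and> y \<le> x}"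
proof (cases "\<exists>z. x < z \<and> z < L")
  case True
  define z where "z = (LEAST z. x < z \<and> z < L)"
  have z: "x < z" "z < L" using LeastI_ex[OF True] unfolding z_def by auto
  have "{y. y<L \<and> y \<le> x} = {y \<in> {..<L}. y < z}"
  proof (auto)
    fix y assume "y \<le> x" then show "y < z" using z by auto
  next
    fix y assume "y < L" "y < z"
    then show "y \<le> x" using not_less_Least[of y "\<lambda>z. x < z \<and> z < L"] z_def by auto
  qed
  also have "openin (order_top_on {..<L}) \<dots>"
    unfolding order_top_on_def openin_topology_generated_by_iff
    by (rule generate_topology_on.Basis) (use z in auto)
  finally show ?thesis .
next
  case False
  then have e: "{y. y<L \<and> y \<le> x} = {..<L}" by auto (meson not_less)
  have "openin (order_top_on {..<L}) {..<L}"
    unfolding order_top_on_def openin_topology_generated_by_iff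
    by (rule generate_topology_on.Basis) auto
  then show ?thesis by (simp add: e)
qed


lemma ot_open_gt:
  assumes "(c::'a::wellorder) < L"
  shows "openin (order_top_on {..<L}) {y. y<L \<and> c < y}"
proof -
  have "{y. y<L \<and> c < y} = {y \<in> {..<L}. c < y}" by auto
  also have "openin (order_top_on {..<L}) \<dots>"
    unfolding order_top_on_def openin_topology_generated_by_iff
    by (rule generate_topology_on.Basis) (use assms in auto)
  finally show ?thesis .
qed


lemma ot_compact:
  assumes "(a::'a::wellorder) < L"
  shows "compactin (order_top_on {..<L}) {..a}"
  unfolding compactin_def
proof (intro conjI allI impI)
  show "{..a} \<subseteq> topspace (order_top_on {..<L})" using assms by (auto simp: ot_topspace)
  fix \<U> assume U: "(\<forall>U\<in>\<U>. openin (order_top_on {..<L}) U) \<and> {..a} \<subseteq> \<Union>\<U>"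
  have "\<forall>x. x \<le> a \<longrightarrow> (\<exists>\<F>. finite \<F> \<and> \<F> \<subseteq> \<U> \<and> {..x} \<subseteq> \<Union>\<F>)"
  proof (rule allI, induct_tac x rule: less_induct)
    fix x assume IH: "\<And>y. y < x \<Longrightarrow> y \<le> a \<longrightarrow> (\<exists>\<F>. finite \<F> \<and> \<F> \<subseteq> \<U> \<and> {..y} \<subseteq> \<Union>\<F>)"
    show "x \<le> a \<longrightarrow> (\<exists>\<F>. finite \<F> \<and> \<F> \<subseteq> \<U> \<and> {..x} \<subseteq> \<Union>\<F>)"
    proof
      assume xa: "x \<le> a"
      then obtain V where V: "V \<in> \<U>" "x \<in> V" using U by auto
      then have "nb L V x" using ot_nbhd[of L V x] U by blast
      then obtain A where A: "finite A" "\<forall>b\<in>A. b<x" "seg L x A \<subseteq> V"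
        unfolding nb_def by blast
      show "\<exists>\<F>. finite \<F> \<and> \<F> \<subseteq> \<U> \<and> {..x} \<subseteq> \<Union>\<F>"
      proof (cases "A = {}")
        case True
        then have "{..x} \<subseteq> V" using A(3) xa assms unfolding seg_def by auto
        then show ?thesis using V by (intro exI[of _ "{V}"]) auto
      next
        case False
        define m where "m = Max A"
        have m: "m \<in> A" "\<forall>b\<in>A. b \<le> m" using A(1) False unfolding m_def by auto
        then have "m < x" using A(2) by auto
        then obtain \<F> where F: "finite \<F>" "\<F> \<subseteq> \<U>" "{..m} \<subseteq> \<Union>\<F>" using IH[of m] xa by auto
        have "{..x} \<subseteq> \<Union>(insert V \<F>)"
        proof
          fix y assume y: "y \<in> {..x}"
          show "y \<in> \<Union>(insert V \<F>)"
          proof (cases "y \<le> m")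
            case True then show ?thesis using F by auto
          next
            case False
            then have "\<forall>b\<in>A. b<y" using m by auto
            then have "y \<in> seg L x A" using y xa assms unfolding seg_def by auto
            then have "y \<in> V" using A(3) by blast
            then show ?thesis by auto
          qed
        qed
        then show ?thesis using F V by (intro exI[of _ "insert V \<F>"]) auto
      qed
    qed
  qed
  then show "\<exists>\<F>. finite \<F> \<and> \<F> \<subseteq> \<U> \<and> {..a} \<subseteq> \<Union>\<F>" by blast
qed

lemma X_top: "topspace (ord_prod n L) = PiE {..<n} (\<lambda>i. {..<L i})"
  unfolding ord_prod_def by (simp add: ot_topspace)




lemma down_sub: "\<alpha> \<in> topspace (ord_prod n L) \<Longrightarrow> down n \<alpha> \<subseteq> topspace (ord_prod n L)"
  unfolding X_top down_def by (auto simp: PiE_iff intro: le_less_trans)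

lemma down_compact:
  assumes "\<alpha> \<in> topspace (ord_prod n L)"
  shows "compactin (ord_prod n L) (down n \<alpha>)"
proof -
  have "\<forall>i\<in>{..<n}. compactin (order_top_on {..<L i}) {..\<alpha> i}"
    using assms unfolding X_top by (auto intro!: ot_compact)
  then show ?thesis unfolding ord_prod_def down_def compactin_PiE by blast
qed

lemma seg_open:
  assumes "x < L" "finite A"
  shows "openin (order_top_on {..<L}) (seg L x A)"
  using assms(2)
proof (induction A)
  case empty
  have "seg L x {} = {y. y<L \<and> y \<le> x}" unfolding seg_def by auto
  then show ?case using ot_open_le[OF assms(1)] by simp
next
  case (insert a A)
  have "seg L x (insert a A) = seg L x A \<inter> {y. y<L \<and> a < y}" unfolding seg_def by auto
  moreover have "openin (order_top_on {..<L}) {y. y<L \<and> a < y}"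
  proof (cases "a < L")
    case True then show ?thesis by (rule ot_open_gt)
  next
    case False
    then have "{y. y<L \<and> a < y} = {}" by auto
    then show ?thesis by (metis openin_empty)
  qed
  ultimately show ?case using insert.IH by auto
qed

lemma box_open:
  assumes "x \<in> topspace (ord_prod n L)" "\<forall>i<n. finite (A i)"
  shows "openin (ord_prod n L) (PiE {..<n} (\<lambda>i. seg (L i) (x i) (A i)))"
  unfolding ord_prod_def openin_PiE_gen
  using assms unfolding X_top by (auto intro!: seg_open simp: PiE_iff)

lemma prod_nbhd:
  assumes "openin (ord_prod n L) U" "x \<in> U"
  shows "\<exists>A. (\<forall>i<n. finite (A i) \<and> (\<forall>a\<in>A i. a < x i)) \<and>
             PiE {..<n} (\<lambda>i. seg (L i) (x i) (A i)) \<subseteq> U"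
proof -
  have "\<forall>x \<in> U. \<exists>V. finite {i \<in> {..<n}. V i \<noteq> topspace(order_top_on {..<L i})} \<and>
                 (\<forall>i \<in> {..<n}. openin (order_top_on {..<L i}) (V i)) \<and> x \<in> Pi\<^sub>E {..<n} V \<and> Pi\<^sub>E {..<n} V \<subseteq> U"
    using assms(1) unfolding ord_prod_def openin_product_topology_alt .
  then have "\<exists>V. finite {i \<in> {..<n}. V i \<noteq> topspace(order_top_on {..<L i})} \<and>
                 (\<forall>i \<in> {..<n}. openin (order_top_on {..<L i}) (V i)) \<and> x \<in> Pi\<^sub>E {..<n} V \<and> Pi\<^sub>E {..<n} V \<subseteq> U"
    using assms(2) by (rule bspec)
  then obtain V where V: "\<forall>i\<in>{..<n}. openin (order_top_on {..<L i}) (V i)" "x \<in> PiE {..<n} V" "PiE {..<n} V \<subseteq> U"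
    by (elim exE conjE) 
  have "\<forall>i<n. nb (L i) (V i) (x i)"
  proof (intro allI impI)
    fix i assume "i < n"
    then show "nb (L i) (V i) (x i)" using V(1,2) by (intro ot_nbhd) (auto simp: PiE_iff)
  qed
  then have "\<forall>i. \<exists>B. i<n \<longrightarrow> finite B \<and> (\<forall>a\<in>B. a < x i) \<and> seg (L i) (x i) B \<subseteq> V i"
    unfolding nb_def by meson
  then have "\<exists>A. \<forall>i. i<n \<longrightarrow> finite (A i) \<and> (\<forall>a\<in>A i. a < x i) \<and> seg (L i) (x i) (A i) \<subseteq> V i"
    by (rule choice)
  then obtain A where A: "\<forall>i. i<n \<longrightarrow> finite (A i) \<and> (\<forall>a\<in>A i. a < x i) \<and> seg (L i) (x i) (A i) \<subseteq> V i"
    by (elim exE)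
  have "PiE {..<n} (\<lambda>i. seg (L i) (x i) (A i)) \<subseteq> PiE {..<n} V"
    using A by (intro PiE_mono) auto
  then have "PiE {..<n} (\<lambda>i. seg (L i) (x i) (A i)) \<subseteq> U" using V(3) by (rule subset_trans)
  moreover have "\<forall>i<n. finite (A i) \<and> (\<forall>a\<in>A i. a < x i)" using A by simp
  ultimately show ?thesis by (intro exI[of _ A]) simp
qed

lemma ray_open:
  assumes "i < n" "c < L i"
  shows "openin (ord_prod n L) {y \<in> topspace (ord_prod n L). c < y i}"
proof -
  define S where "S = (\<lambda>j. if j = i then {y. y < L i \<and> c < y} else {..<L j})"
  have "{y \<in> topspace (ord_prod n L). c < y i} = PiE {..<n} S"
  proof (rule set_eqI)
    fix y
    show "y \<in> {y \<in> topspace (ord_prod n L). c < y i} \<longleftrightarrow> y \<in> PiE {..<n} S"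
    proof
      assume "y \<in> {y \<in> topspace (ord_prod n L). c < y i}"
      then have y: "y \<in> PiE {..<n} (\<lambda>i. {..<L i})" "c < y i" unfolding X_top by auto
      show "y \<in> PiE {..<n} S" unfolding PiE_iff
      proof
        show "\<forall>j\<in>{..<n}. y j \<in> S j"
        proof
          fix j assume "j \<in> {..<n}"
          then show "y j \<in> S j" using y unfolding S_def by (cases "j = i") (auto simp: PiE_iff)
        qed
        show "y \<in> extensional {..<n}" using y(1) by (simp add: PiE_iff)
      qed
    next
      assume y: "y \<in> PiE {..<n} S"
      then have "y i \<in> S i" using assms(1) by (simp add: PiE_iff)
      then have ci: "c < y i" unfolding S_def by simp
      have "y \<in> PiE {..<n} (\<lambda>i. {..<L i})" unfolding PiE_iff
      proof
        show "\<forall>j\<in>{..<n}. y j \<in> {..<L j}"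
        proof
          fix j assume "j \<in> {..<n}"
          then have "y j \<in> S j" using y by (simp add: PiE_iff)
          then show "y j \<in> {..<L j}" unfolding S_def by (cases "j = i") auto
        qed
        show "y \<in> extensional {..<n}" using y by (simp add: PiE_iff)
      qed
      then show "y \<in> {y \<in> topspace (ord_prod n L). c < y i}" using ci unfolding X_top by simp
    qed
  qed
  moreover have "openin (ord_prod n L) (PiE {..<n} S)"
    unfolding ord_prod_def openin_PiE_gen
  proof (intro disjI2 conjI)
    show "finite {j \<in> {..<n}. S j \<noteq> topspace (order_top_on {..<L j})}" by simp
    show "\<forall>j\<in>{..<n}. openin (order_top_on {..<L j}) (S j)"
    proof
      fix j assume "j \<in> {..<n}"
      show "openin (order_top_on {..<L j}) (S j)"
      proof (cases "j = i")
        case True then show ?thesis unfolding S_def using ot_open_gt[OF assms(2)] by simp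
      next
        case False
        then have "S j = topspace (order_top_on {..<L j})" unfolding S_def ot_topspace by simp
        then show ?thesis by simp
      qed
    qed
  qed
  ultimately show ?thesis by simp
qed



definition ct :: "'a::linorder set \<Rightarrow> 'a set \<Rightarrow> 'a \<Rightarrow> 'a set" where
  "ct \<mu> F c = {y \<in> \<mu>. \<forall>f\<in>F. f < c \<longleftrightarrow> f < y}"

lemma cut_in_grid1:
  fixes F :: "'a::wellorder set"
  assumes "finite F" "c \<in> \<mu>"
  shows "ct \<mu> F c \<in> grid1 \<mu> F"
proof (cases "F = {}")
  case True
  then show ?thesis unfolding grid1_def ct_def by simp
next
  case False
  have mn: "Min F \<in> F" "\<forall>f\<in>F. Min F \<le> f" using assms(1) False by auto
  have mx: "Max F \<in> F" "\<forall>f\<in>F. f \<le> Max F" using assms(1) False by auto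
  show ?thesis
  proof (cases "c \<le> Min F")
    case True
    have "ct \<mu> F c = {y \<in> \<mu>. y \<le> Min F}"
      unfolding ct_def using True mn by (auto simp: not_less)
    then show ?thesis unfolding grid1_def using False by simp
  next
    case c1: False
    show ?thesis
    proof (cases "Max F < c")
      case True
      have "ct \<mu> F c = {y \<in> \<mu>. Max F < y}"
        unfolding ct_def using True mx by (auto simp: not_less)
      then show ?thesis unfolding grid1_def using False by simp
    next
      case c2: False
      define P where "P = {f\<in>F. f < c}"
      define Q where "Q = {f\<in>F. c \<le> f}"
      have Pne: "P \<noteq> {}" using c1 mn unfolding P_def by auto
      have Qne: "Q \<noteq> {}" using c2 mx unfolding Q_def by auto
      have fP: "finite P" "finite Q" using assms(1) unfolding P_def Q_def by auto
      define x where "x = Max P"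
      define x' where "x' = Min Q"
      have x: "x \<in> F" "x < c" "\<forall>f\<in>F. f < c \<longrightarrow> f \<le> x"
        using Max_in[OF fP(1) Pne] Max_ge[OF fP(1)] unfolding x_def P_def by auto
      have x': "x' \<in> F" "c \<le> x'" "\<forall>f\<in>F. c \<le> f \<longrightarrow> x' \<le> f"
        using Min_in[OF fP(2) Qne] Min_le[OF fP(2)] unfolding x'_def Q_def by auto
      have xx: "x < x'" using x x' by auto
      have nz: "\<not> (\<exists>z \<in> F. x < z \<and> z < x')"
        using x x' by (meson leD not_le)
      have "ct \<mu> F c = {y \<in> \<mu>. x < y \<and> y \<le> x'}"
      proof (rule set_eqI, rule iffI)
        fix y assume y: "y \<in> ct \<mu> F c"
        then have "x < y" using x unfolding ct_def by auto
        moreover have "y \<le> x'" using y x' unfolding ct_def by (auto simp: not_less)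
        ultimately show "y \<in> {y \<in> \<mu>. x < y \<and> y \<le> x'}" using y unfolding ct_def by auto
      next
        fix y assume y: "y \<in> {y \<in> \<mu>. x < y \<and> y \<le> x'}"
        have "\<forall>f\<in>F. f < c \<longleftrightarrow> f < y"
        proof
          fix f assume f: "f \<in> F"
          show "f < c \<longleftrightarrow> f < y"
          proof
            assume "f < c" then have "f \<le> x" using x f by auto
            then show "f < y" using y by auto
          next
            assume fy: "f < y"
            show "f < c"
            proof (rule ccontr)
              assume "\<not> f < c" then have "c \<le> f" by simp
              then have "x' \<le> f" using x' f by auto
              then show False using fy y by auto
            qed
          qed
        qed
        then show "y \<in> ct \<mu> F c" using y unfolding ct_def by auto
      qed
      then have "ct \<mu> F c \<in> {{y \<in> \<mu>. x < y \<and> y \<le> x'} | x x'. x \<in> F \<and> x' \<in> F \<and> x < x' \<and> \<not> (\<exists>z \<in> F. x < z \<and> z < x')}"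
        using x(1) x'(1) xx nz by (intro CollectI exI[of _ x] exI[of _ x']) simp
      then show ?thesis unfolding grid1_def using False by simp
    qed
  qed
qed

lemma grid1_cut:
  fixes F :: "'a::wellorder set"
  assumes "finite F" "P \<in> grid1 \<mu> F" "c \<in> P"
  shows "P = ct \<mu> F c"
proof (cases "F = {}")
  case True
  then show ?thesis using assms unfolding grid1_def ct_def by simp
next
  case False
  have mn: "Min F \<in> F" "\<forall>f\<in>F. Min F \<le> f" using assms(1) False by auto
  have mx: "Max F \<in> F" "\<forall>f\<in>F. f \<le> Max F" using assms(1) False by auto
  from assms(2) False consider "P = {y \<in> \<mu>. y \<le> Min F}"
    | x x' where "P = {y \<in> \<mu>. x < y \<and> y \<le> x'}" "x \<in> F" "x' \<in> F" "x < x'" "\<not> (\<exists>z \<in> F. x < z \<and> z < x')"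
    | "P = {y \<in> \<mu>. Max F < y}"
  proof -
    assume a1: "P = {y \<in> \<mu>. y \<le> Min F} \<Longrightarrow> thesis"
      and a2: "\<And>x x'. P = {y \<in> \<mu>. x < y \<and> y \<le> x'} \<Longrightarrow> x \<in> F \<Longrightarrow> x' \<in> F \<Longrightarrow> x < x' \<Longrightarrow> \<not> (\<exists>z \<in> F. x < z \<and> z < x') \<Longrightarrow> thesis"
      and a3: "P = {y \<in> \<mu>. Max F < y} \<Longrightarrow> thesis"
    have "P \<in> {{y \<in> \<mu>. y \<le> Min F}}
    \<union> {{y \<in> \<mu>. x < y \<and> y \<le> x'} | x x'. x \<in> F \<and> x' \<in> F \<and> x < x' \<and> \<not> (\<exists>z \<in> F. x < z \<and> z < x')}
    \<union> {{y \<in> \<mu>. Max F < y}}" using assms(2) False unfolding grid1_def by simp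
    then show thesis
    proof (elim UnE)
      assume "P \<in> {{y \<in> \<mu>. y \<le> Min F}}" then show thesis using a1 by simp
    next
      assume "P \<in> {{y \<in> \<mu>. Max F < y}}" then show thesis using a3 by simp
    next
      assume "P \<in> {{y \<in> \<mu>. x < y \<and> y \<le> x'} | x x'. x \<in> F \<and> x' \<in> F \<and> x < x' \<and> \<not> (\<exists>z \<in> F. x < z \<and> z < x')}"
      then obtain x x' where "P = {y \<in> \<mu>. x < y \<and> y \<le> x'}" "x \<in> F" "x' \<in> F" "x < x'" "\<not> (\<exists>z \<in> F. x < z \<and> z < x')"
        unfolding mem_Collect_eq by (elim exE conjE)
      then show thesis using a2 by blast
    qed
  qed
  then show ?thesis
  proof cases
    case 1
    have "\<And>y. y \<in> P \<longleftrightarrow> y \<in> ct \<mu> F c"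
      using assms(3) mn unfolding 1 ct_def
      by (auto simp: not_less)
    then show ?thesis by auto
  next
    case (2 x x')
    note Pd = 2(1)
    have xF: "x \<in> F" and x'F: "x' \<in> F" and xx: "x < x'" and nz: "\<forall>z\<in>F. \<not> (x < z \<and> z < x')"
      using 2 by auto
    have memP: "\<And>y. y \<in> P \<longleftrightarrow> y \<in> \<mu> \<and> x < y \<and> y \<le> x'" using Pd by simp
    have key: "\<And>y f. y \<in> P \<Longrightarrow> f \<in> F \<Longrightarrow> f < y \<longleftrightarrow> f \<le> x"
    proof -
      fix y f assume y: "y \<in> P" and f: "f \<in> F"
      have y': "x < y" "y \<le> x'" using y memP by auto
      show "f < y \<longleftrightarrow> f \<le> x"
      proof
        assume fy: "f < y"
        show "f \<le> x"
        proof (rule ccontr)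
          assume "\<not> f \<le> x" then have "x < f" by simp
          then have "x' \<le> f" using nz f by (meson not_less)
          then show False using fy y' by simp
        qed
      next
        assume "f \<le> x" then show "f < y" using y' by simp
      qed
    qed
    have "\<And>y. y \<in> P \<longleftrightarrow> y \<in> ct \<mu> F c"
    proof
      fix y assume y: "y \<in> P"
      have "\<forall>f\<in>F. f < c \<longleftrightarrow> f < y"
      proof
        fix f assume "f \<in> F"
        then show "f < c \<longleftrightarrow> f < y" using key[OF y] key[OF assms(3)] by simp
      qed
      then show "y \<in> ct \<mu> F c" using y memP unfolding ct_def by simp
    next
      fix y assume y: "y \<in> ct \<mu> F c"
      have yc: "y \<in> \<mu>" "\<forall>f\<in>F. f < c \<longleftrightarrow> f < y" using y unfolding ct_def by auto
      have "x < c" using key[OF assms(3) xF] by simp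
      then have "x < y" using yc xF by simp
      moreover have "y \<le> x'"
      proof (rule ccontr)
        assume "\<not> y \<le> x'" then have "x' < y" by simp
        then have "x' < c" using yc x'F by simp
        then have "x' \<le> x" using key[OF assms(3) x'F] by simp
        then show False using xx by simp
      qed
      ultimately show "y \<in> P" using yc memP by simp
    qed
    then show ?thesis by auto
  next
    case 3
    have "\<And>y. y \<in> P \<longleftrightarrow> y \<in> ct \<mu> F c"
      using assms(3) mx unfolding 3 ct_def
      by (auto simp: not_less)
    then show ?thesis by auto
  qed
qed

definition pc :: "nat \<Rightarrow> (nat \<Rightarrow> 'a::wellorder) \<Rightarrow> (nat \<Rightarrow> 'a set) \<Rightarrow> (nat \<Rightarrow> 'a) \<Rightarrow> (nat \<Rightarrow> 'a) set" where
  "pc n \<alpha> F c = PiE {..<n} (\<lambda>i. ct {..\<alpha> i} (F i) (c i))"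

lemma pc_in_grid:
  assumes "c \<in> down n \<alpha>" "\<forall>i<n. finite (F i)"
  shows "pc n \<alpha> F c \<in> grid n \<alpha> F"
proof -
  have "\<forall>i<n. ct {..\<alpha> i} (F i) (c i) \<in> grid1 {..\<alpha> i} (F i)"
    using assms unfolding down_def by (auto intro!: cut_in_grid1 simp: PiE_iff)
  then show ?thesis unfolding grid_def pc_def
    by (intro CollectI exI[of _ "\<lambda>i. ct {..\<alpha> i} (F i) (c i)"]) simp
qed

lemma pc_self: "c \<in> down n \<alpha> \<Longrightarrow> c \<in> pc n \<alpha> F c"
  unfolding pc_def down_def ct_def by (auto simp: PiE_iff)

lemma pc_sub: "pc n \<alpha> F c \<subseteq> down n \<alpha>"
  unfolding pc_def down_def ct_def by (auto simp: PiE_iff)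

lemma grid_pc:
  assumes "P \<in> grid n \<alpha> F" "p \<in> P" "\<forall>i<n. finite (F i)"
  shows "P = pc n \<alpha> F p"
proof -
  obtain U where U: "P = PiE {..<n} U" "\<forall>i<n. U i \<in> grid1 {..\<alpha> i} (F i)"
    using assms(1) unfolding grid_def by blast
  have "\<forall>i<n. U i = ct {..\<alpha> i} (F i) (p i)"
  proof (intro allI impI)
    fix i assume i: "i < n"
    have "p i \<in> U i" using assms(2) i unfolding U(1) by (auto simp: PiE_iff)
    then show "U i = ct {..\<alpha> i} (F i) (p i)" using grid1_cut[of "F i" "U i"] U(2) assms(3) i by blast
  qed
  then show ?thesis unfolding U(1) pc_def by (intro PiE_cong) auto
qed

lemma U_pc:
  assumes "h \<in> U_part n L \<alpha> (grid n \<alpha> F)" "c \<in> down n \<alpha>" "\<forall>i<n. finite (F i)"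
  shows "h ` pc n \<alpha> F c = pc n \<alpha> F c"
  using assms pc_in_grid[OF assms(2,3)] unfolding U_part_def by blast

lemma U_fix: "h \<in> U_part n L \<alpha> A \<Longrightarrow> x \<notin> down n \<alpha> \<Longrightarrow> h x = x"
  unfolding U_part_def Homeo_K_def by auto

lemma refine:
  assumes le: "\<forall>i<n. \<alpha> i \<le> \<beta> i"
    and sub: "\<forall>i<n. F i \<inter> {..<\<alpha> i} \<subseteq> F' i"
    and fin: "\<forall>i<n. finite (F i)" "\<forall>i<n. finite (F' i)"
  shows "U_part n L \<alpha> (grid n \<alpha> F') \<subseteq> U_part n L \<beta> (grid n \<beta> F)"
proof
  fix h assume h: "h \<in> U_part n L \<alpha> (grid n \<alpha> F')"
  have Dsub: "down n \<alpha> \<subseteq> down n \<beta>" using le unfolding down_def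
    by (auto simp: PiE_iff intro: order.trans)
  have hK: "h \<in> Homeo_K (ord_prod n L) (down n \<beta>)"
    using h Dsub unfolding U_part_def Homeo_K_def by auto
  have "\<forall>P \<in> grid n \<beta> F. h ` P = P"
  proof
    fix P assume P: "P \<in> grid n \<beta> F"
    have inP: "pc n \<alpha> F' p \<subseteq> P" if p: "p \<in> P" "p \<in> down n \<alpha>" for p
    proof
      fix y assume y: "y \<in> pc n \<alpha> F' p"
      have Pe: "P = pc n \<beta> F p" using grid_pc[OF P p(1) fin(1)] .
      have "y \<in> pc n \<beta> F p" unfolding pc_def PiE_iff
      proof
        show "\<forall>i\<in>{..<n}. y i \<in> ct {..\<beta> i} (F i) (p i)"
        proof
          fix i assume i: "i \<in> {..<n}"
          have yi: "y i \<le> \<alpha> i" "\<forall>f\<in>F' i. f < p i \<longleftrightarrow> f < y i"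
            using y i unfolding pc_def ct_def by (auto simp: PiE_iff)
          have pi: "p i \<le> \<alpha> i" using p(2) i unfolding down_def by (auto simp: PiE_iff)
          have "\<forall>f\<in>F i. f < p i \<longleftrightarrow> f < y i"
          proof
            fix f assume f: "f \<in> F i"
            show "f < p i \<longleftrightarrow> f < y i"
            proof (cases "f < \<alpha> i")
              case True
              then have "f \<in> F' i" using sub f i by auto
              then show ?thesis using yi by auto
            next
              case False
              then show ?thesis using yi(1) pi by (meson leI le_less_trans order.trans not_le)
            qed
          qed
          moreover have "y i \<le> \<beta> i" using yi(1) le i by (meson lessThan_iff order.trans)
          ultimately show "y i \<in> ct {..\<beta> i} (F i) (p i)" unfolding ct_def by simp
        qed
        show "y \<in> extensional {..<n}" using y unfolding pc_def by (simp add: PiE_iff)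
      qed
      then show "y \<in> P" using Pe by simp
    qed
    show "h ` P = P"
    proof
      show "h ` P \<subseteq> P"
      proof
        fix z assume "z \<in> h ` P"
        then obtain x where x: "x \<in> P" "z = h x" by blast
        show "z \<in> P"
        proof (cases "x \<in> down n \<alpha>")
          case True
          have "h x \<in> h ` pc n \<alpha> F' x" using pc_self[OF True] by blast
          then have "h x \<in> pc n \<alpha> F' x" using U_pc[OF h True fin(2)] by simp
          then show ?thesis using inP[OF x(1) True] x(2) by blast
        next
          case False
          then show ?thesis using U_fix[OF h False] x by simp
        qed
      qed
      show "P \<subseteq> h ` P"
      proof
        fix x assume x: "x \<in> P"
        show "x \<in> h ` P"
        proof (cases "x \<in> down n \<alpha>")
          case True
          have "x \<in> h ` pc n \<alpha> F' x" using pc_self[OF True] U_pc[OF h True fin(2)] by simp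
          then show ?thesis using inP[OF x True] by blast
        next
          case False
          then have "h x = x" using U_fix[OF h False] by simp
          then show ?thesis using x by (metis image_eqI)
        qed
      qed
    qed
  qed
  then show "h \<in> U_part n L \<beta> (grid n \<beta> F)" using hK unfolding U_part_def by blast
qed



lemma outside_down:
  assumes "x \<in> topspace (ord_prod n L)" "x \<notin> down n \<alpha>"
  shows "\<exists>i<n. \<alpha> i < x i"
proof (rule ccontr)
  assume "\<not> (\<exists>i<n. \<alpha> i < x i)"
  then have "\<forall>i<n. x i \<le> \<alpha> i" by (meson not_less)
  then have "x \<in> down n \<alpha>" using assms(1) unfolding X_top down_def by (auto simp: PiE_iff)
  then show False using assms(2) by simp
qed

lemma basis_case:
  assumes \<alpha>: "\<alpha> \<in> topspace (ord_prod n L)"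
    and C: "compactin (ord_prod n L) C" and U: "openin (ord_prod n L) U" and CU: "C \<subseteq> U"
  shows "\<exists>F. (\<forall>i<n. finite (F i) \<and> F i \<subseteq> {..<\<alpha> i}) \<and> (\<forall>h \<in> U_part n L \<alpha> (grid n \<alpha> F). h ` C \<subseteq> U)"
proof -
  let ?X = "ord_prod n L"
  let ?D = "down n \<alpha>"
  define box where "box = (\<lambda>x A. PiE {..<n} (\<lambda>i. seg (L i) (x i) (A i)))"
  have Ctop: "C \<subseteq> topspace ?X" using C by (rule compactin_subset_topspace)
  have exA: "\<exists>A. (\<forall>i<n. finite (A i) \<and> (\<forall>a\<in>A i. a < x i)) \<and> box x A \<subseteq> U" if "x \<in> C" for x
    unfolding box_def using prod_nbhd[OF U] that CU by blast
  have exi: "\<exists>i<n. \<alpha> i < x i" if "x \<in> C" "x \<notin> ?D" for x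
    using outside_down[of x n L \<alpha>] that Ctop by blast
  define Ax where "Ax = (\<lambda>x. SOME A. (\<forall>i<n. finite (A i) \<and> (\<forall>a\<in>A i. a < x i)) \<and> box x A \<subseteq> U)"
  define ix where "ix = (\<lambda>x. SOME i. i<n \<and> \<alpha> i < x i)"
  have Ax: "(\<forall>i<n. finite (Ax x i) \<and> (\<forall>a\<in>Ax x i. a < x i)) \<and> box x (Ax x) \<subseteq> U" if "x \<in> C" for x
    using exA[OF that] unfolding Ax_def by (rule someI_ex)
  have ix: "ix x < n \<and> \<alpha> (ix x) < x (ix x)" if "x \<in> C" "x \<notin> ?D" for x
    using exi[OF that] unfolding ix_def by (rule someI_ex)
  define Ob where "Ob = (\<lambda>x. if x \<in> ?D then box x (Ax x) else {y \<in> topspace ?X. \<alpha> (ix x) < y (ix x)})"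
  have Oopen: "openin ?X (Ob x)" if "x \<in> C" for x
  proof (cases "x \<in> ?D")
    case True
    then show ?thesis unfolding Ob_def box_def using box_open[of x n L "Ax x"] Ax[OF that] Ctop that by auto
  next
    case False
    have "\<alpha> (ix x) < L (ix x)" using \<alpha> ix[OF that False] unfolding X_top by (auto simp: PiE_iff)
    then show ?thesis unfolding Ob_def using False ray_open[of "ix x" n "\<alpha> (ix x)" L] ix[OF that False] by simp
  qed
  have Oin: "x \<in> Ob x" if "x \<in> C" for x
  proof (cases "x \<in> ?D")
    case True
    have "x \<in> box x (Ax x)" unfolding box_def PiE_iff
    proof
      show "\<forall>i\<in>{..<n}. x i \<in> seg (L i) (x i) (Ax x i)"
        using Ax[OF that] Ctop that unfolding seg_def X_top by (auto simp: PiE_iff)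
      show "x \<in> extensional {..<n}" using Ctop that unfolding X_top by (auto simp: PiE_iff)
    qed
    then show ?thesis unfolding Ob_def using True by simp
  next
    case False
    then show ?thesis unfolding Ob_def using ix[OF that False] Ctop that by auto
  qed
  have "\<exists>\<F>. finite \<F> \<and> \<F> \<subseteq> Ob ` C \<and> C \<subseteq> \<Union>\<F>"
  proof -
    have "(\<forall>V\<in>Ob ` C. openin ?X V) \<and> C \<subseteq> \<Union>(Ob ` C)" using Oopen Oin by blast
    then show ?thesis using C unfolding compactin_def by blast
  qed
  then obtain \<F> where F: "finite \<F>" "\<F> \<subseteq> Ob ` C" "C \<subseteq> \<Union>\<F>" by blast
  then obtain C0 where C0: "C0 \<subseteq> C" "finite C0" "\<F> = Ob ` C0"
    by (meson finite_subset_image)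
  define F where "F = (\<lambda>i. {z. z < \<alpha> i \<and> (\<exists>x\<in>C0 \<inter> ?D. z \<in> Ax x i \<or> z = x i)})"
  have Ffin: "finite (F i)" if "i < n" for i
  proof -
    have "F i \<subseteq> (\<Union>x\<in>C0 \<inter> ?D. insert (x i) (Ax x i))" unfolding F_def by auto
    moreover have "finite (\<Union>x\<in>C0 \<inter> ?D. insert (x i) (Ax x i))"
      using C0 Ax that by auto
    ultimately show ?thesis by (rule finite_subset)
  qed
  have Fsub: "F i \<subseteq> {..<\<alpha> i}" for i unfolding F_def by auto
  have main: "h ` C \<subseteq> U" if h: "h \<in> U_part n L \<alpha> (grid n \<alpha> F)" for h
  proof
    fix z assume "z \<in> h ` C"
    then obtain c where c: "c \<in> C" "z = h c" by blast
    show "z \<in> U"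
    proof (cases "c \<in> ?D")
      case False
      then show ?thesis using U_fix[OF h False] c CU by auto
    next
      case cD: True
      obtain x where x: "x \<in> C0" "c \<in> Ob x" using F(3) C0(3) c(1) by blast
      have xC: "x \<in> C" using x C0 by auto
      have xD: "x \<in> ?D"
      proof (rule ccontr)
        assume nx: "x \<notin> ?D"
        then have "\<alpha> (ix x) < c (ix x)" using x(2) unfolding Ob_def by simp
        moreover have "c (ix x) \<le> \<alpha> (ix x)" using cD ix[OF xC nx] unfolding down_def by (auto simp: PiE_iff)
        ultimately show False by simp
      qed
      have cbox: "c \<in> box x (Ax x)" using x(2) xD unfolding Ob_def by simp
      have "h c \<in> h ` pc n \<alpha> F c" using pc_self[OF cD] by blast
      then have hc: "h c \<in> pc n \<alpha> F c" using U_pc[OF h cD] Ffin by simp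
      have "pc n \<alpha> F c \<subseteq> box x (Ax x)"
      proof
        fix y assume y: "y \<in> pc n \<alpha> F c"
        show "y \<in> box x (Ax x)" unfolding box_def PiE_iff
        proof
          show "y \<in> extensional {..<n}" using y unfolding pc_def by (simp add: PiE_iff)
          show "\<forall>i\<in>{..<n}. y i \<in> seg (L i) (x i) (Ax x i)"
          proof
            fix i assume i: "i \<in> {..<n}"
            have yi: "y i \<le> \<alpha> i" "\<forall>f\<in>F i. f < c i \<longleftrightarrow> f < y i"
              using y i unfolding pc_def ct_def by (auto simp: PiE_iff)
            have ci: "c i \<le> x i" "\<forall>a\<in>Ax x i. a < c i"
              using cbox i unfolding box_def seg_def by (auto simp: PiE_iff)
            have cia: "c i \<le> \<alpha> i" using cD i unfolding down_def by (auto simp: PiE_iff)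
            have xia: "x i \<le> \<alpha> i" using xD i unfolding down_def by (auto simp: PiE_iff)
            have aL: "\<alpha> i < L i" using \<alpha> i unfolding X_top by (auto simp: PiE_iff)
            have "y i \<le> x i"
            proof (cases "x i < \<alpha> i")
              case True
              then have "x i \<in> F i" unfolding F_def using x(1) xD by blast
              then have "\<not> x i < y i" using yi(2) ci(1) by (meson not_less)
              then show ?thesis by simp
            next
              case False
              then show ?thesis using yi(1) xia by simp
            qed
            moreover have "\<forall>a\<in>Ax x i. a < y i"
            proof
              fix a assume a: "a \<in> Ax x i"
              have "a < c i" using ci(2) a by blast
              then have "a < \<alpha> i" using cia by simp
              then have "a \<in> F i" unfolding F_def using x(1) xD a by blast
              then show "a < y i" using yi(2) \<open>a < c i\<close> by blast
            qed
            moreover have "y i < L i" using yi(1) aL by simp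
            ultimately show "y i \<in> seg (L i) (x i) (Ax x i)" unfolding seg_def by simp
          qed
        qed
      qed
      then have "h c \<in> box x (Ax x)" using hc by blast
      then show ?thesis using Ax[OF xC] c(2) by blast
    qed
  qed
  show ?thesis
    by (rule exI[of _ F]) (use Ffin Fsub main in blast)
qed

lemma good_exists:
  assumes \<alpha>: "\<alpha> \<in> topspace (ord_prod n L)"
    and V: "openin (compact_open_top (ord_prod n L) (Homeo_K (ord_prod n L) (down n \<alpha>))) V"
    and idV: "id \<in> V"
  shows "\<exists>F. (\<forall>i<n. finite (F i) \<and> F i \<subseteq> {..<\<alpha> i}) \<and> U_part n L \<alpha> (grid n \<alpha> F) \<subseteq> V"
proof -
  let ?X = "ord_prod n L"
  let ?H = "Homeo_K (ord_prod n L) (down n \<alpha>)"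
  have g: "generate_topology_on ({?H} \<union> {{h \<in> ?H. h ` C \<subseteq> U} | C U. compactin ?X C \<and> openin ?X U}) V"
    using V unfolding compact_open_top_def by (rule openin_topology_generated_by)
  have UH: "U_part n L \<alpha> A \<subseteq> ?H" for A unfolding U_part_def by blast
  have "id \<in> V \<longrightarrow> (\<exists>F. (\<forall>i<n. finite (F i) \<and> F i \<subseteq> {..<\<alpha> i}) \<and> U_part n L \<alpha> (grid n \<alpha> F) \<subseteq> V)"
    using g
  proof (induction rule: generate_topology_on.induct)
    case Empty
    then show ?case by simp
  next
    case (Int a b)
    show ?case
    proof
      assume "id \<in> a \<inter> b"
      then obtain F1 F2 where F1: "\<forall>i<n. finite (F1 i) \<and> F1 i \<subseteq> {..<\<alpha> i}" "U_part n L \<alpha> (grid n \<alpha> F1) \<subseteq> a"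
        and F2: "\<forall>i<n. finite (F2 i) \<and> F2 i \<subseteq> {..<\<alpha> i}" "U_part n L \<alpha> (grid n \<alpha> F2) \<subseteq> b"
        using Int.IH by blast
      define F where "F = (\<lambda>i. F1 i \<union> F2 i)"
      have Fp: "\<forall>i<n. finite (F i) \<and> F i \<subseteq> {..<\<alpha> i}" using F1(1) F2(1) unfolding F_def by auto
      have "U_part n L \<alpha> (grid n \<alpha> F) \<subseteq> U_part n L \<alpha> (grid n \<alpha> F1)"
        by (rule refine) (use F1(1) Fp in \<open>auto simp: F_def\<close>)
      moreover have "U_part n L \<alpha> (grid n \<alpha> F) \<subseteq> U_part n L \<alpha> (grid n \<alpha> F2)"
        by (rule refine) (use F2(1) Fp in \<open>auto simp: F_def\<close>)
      ultimately have "U_part n L \<alpha> (grid n \<alpha> F) \<subseteq> a \<inter> b" using F1(2) F2(2) by blast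
      then show "\<exists>F. (\<forall>i<n. finite (F i) \<and> F i \<subseteq> {..<\<alpha> i}) \<and> U_part n L \<alpha> (grid n \<alpha> F) \<subseteq> a \<inter> b"
        using Fp by blast
    qed
  next
    case (UN K)
    show ?case
    proof
      assume "id \<in> \<Union>K"
      then obtain k where k: "k \<in> K" "id \<in> k" by blast
      then obtain F where "\<forall>i<n. finite (F i) \<and> F i \<subseteq> {..<\<alpha> i}" "U_part n L \<alpha> (grid n \<alpha> F) \<subseteq> k"
        using UN.IH by blast
      then show "\<exists>F. (\<forall>i<n. finite (F i) \<and> F i \<subseteq> {..<\<alpha> i}) \<and> U_part n L \<alpha> (grid n \<alpha> F) \<subseteq> \<Union>K"
        using k(1) by blast
    qed
  next
    case (Basis s)
    show ?case
    proof
      assume ids: "id \<in> s"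
      have "s = ?H \<or> (\<exists>C U. s = {h \<in> ?H. h ` C \<subseteq> U} \<and> compactin ?X C \<and> openin ?X U)"
        using Basis.hyps by blast
      then show "\<exists>F. (\<forall>i<n. finite (F i) \<and> F i \<subseteq> {..<\<alpha> i}) \<and> U_part n L \<alpha> (grid n \<alpha> F) \<subseteq> s"
      proof
        assume "s = ?H"
        then show ?thesis using UH by (intro exI[of _ "\<lambda>i. {}"]) auto
      next
        assume "\<exists>C U. s = {h \<in> ?H. h ` C \<subseteq> U} \<and> compactin ?X C \<and> openin ?X U"
        then obtain C U where s: "s = {h \<in> ?H. h ` C \<subseteq> U}" "compactin ?X C" "openin ?X U" by blast
        have "C \<subseteq> U" using ids s(1) by simp
        then obtain F where F: "\<forall>i<n. finite (F i) \<and> F i \<subseteq> {..<\<alpha> i}"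
          "\<forall>h \<in> U_part n L \<alpha> (grid n \<alpha> F). h ` C \<subseteq> U"
          using basis_case[OF \<alpha> s(2) s(3)] by blast
        have "U_part n L \<alpha> (grid n \<alpha> F) \<subseteq> s" using F(2) UH s(1) by blast
        then show ?thesis using F(1) by blast
      qed
    qed
  qed
  then show ?thesis using idV by blast
qed



lemma bounded_seq:
  fixes g :: "nat \<Rightarrow> 'a::wellorder"
  assumes gL: "\<forall>k. g k < L" and ncf: "\<not> cofinality_omega L"
  shows "\<exists>b<L. \<forall>k. g k \<le> b"
proof (rule ccontr)
  assume "\<not> (\<exists>b<L. \<forall>k. g k \<le> b)"
  then have unb: "\<forall>b<L. \<exists>k. b < g k" by (meson not_le)
  define f where "f = rec_nat (g 0) (\<lambda>j fj. g (SOME k. max fj (g (Suc j)) < g k))"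
  have f0: "f 0 = g 0" unfolding f_def by simp
  have fS: "f (Suc j) = g (SOME k. max (f j) (g (Suc j)) < g k)" for j unfolding f_def by simp
  have inv: "f j < L \<and> g j \<le> f j" for j
  proof (induction j)
    case 0 then show ?case using f0 gL by simp
  next
    case (Suc j)
    have "max (f j) (g (Suc j)) < L" using Suc gL by simp
    then have "\<exists>k. max (f j) (g (Suc j)) < g k" using unb by blast
    then have "max (f j) (g (Suc j)) < g (SOME k. max (f j) (g (Suc j)) < g k)" by (rule someI_ex)
    then have m: "max (f j) (g (Suc j)) < f (Suc j)" by (simp only: fS)
    have "f (Suc j) < L" unfolding fS using gL by blast
    moreover have "g (Suc j) \<le> f (Suc j)" using m by (simp add: less_imp_le)
    ultimately show ?case by simp
  qed
  have step: "f j < f (Suc j)" for j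
  proof -
    have "max (f j) (g (Suc j)) < L" using inv gL by simp
    then have "\<exists>k. max (f j) (g (Suc j)) < g k" using unb by blast
    then have "max (f j) (g (Suc j)) < g (SOME k. max (f j) (g (Suc j)) < g k)" by (rule someI_ex)
    then have m: "max (f j) (g (Suc j)) < f (Suc j)" by (simp only: fS)
    then show ?thesis by simp
  qed
  have "strict_mono f" unfolding strict_mono_Suc_iff using step by blast
  moreover have "\<forall>k. f k < L" using inv by blast
  moreover have "\<forall>y. y < L \<longrightarrow> (\<exists>k. y \<le> f k)"
  proof (intro allI impI)
    fix y assume "y < L"
    then obtain k where "y < g k" using unb by blast
    then have "y < f k" using inv[of k] by (meson less_le_trans)
    then have "y \<le> f k" by (rule less_imp_le)
    then show "\<exists>k. y \<le> f k" by blast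
  qed
  ultimately have "cofinality_omega L" unfolding cofinality_omega_def by blast
  then show False using ncf by simp
qed

lemma pad:
  assumes "finite F" "finite S" "F \<subseteq> Y" "S \<subseteq> Y" "card F \<le> m" "m \<le> card S"
  shows "\<exists>F'. F \<subseteq> F' \<and> F' \<subseteq> Y \<and> finite F' \<and> card F' = m"
proof -
  have "card S \<le> card (S - F) + card F"
  proof -
    have "S \<subseteq> (S - F) \<union> F" by blast
    then have "card S \<le> card ((S - F) \<union> F)" using assms(1,2) by (intro card_mono) auto
    also have "\<dots> \<le> card (S - F) + card F" by (rule card_Un_le)
    finally show ?thesis .
  qed
  then have "m - card F \<le> card (S - F)" using assms(6) by simp
  then obtain T where T: "T \<subseteq> S - F" "card T = m - card F" "finite T"
    by (rule obtain_subset_with_card_n)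
  have "card (F \<union> T) = card F + card T" using T assms(1) by (intro card_Un_disjoint) auto
  then have "card (F \<union> T) = m" using T(2) assms(5) by simp
  then show ?thesis using T assms by (intro exI[of _ "F \<union> T"]) auto
qed

lemma coord_choice:
  fixes L :: "'a::wellorder" and a1 :: 'a and B :: nat
  assumes "a1 < L"
  shows "\<exists>z m. z < L \<and> a1 \<le> z \<and> (\<forall>a. z \<le> a \<and> a < L \<longrightarrow>
     (\<forall>F. finite F \<and> F \<subseteq> {..<a} \<and> card F \<le> B \<longrightarrow> (\<exists>F'. F \<subseteq> F' \<and> F' \<subseteq> {..<a} \<and> finite F' \<and> card F' = m)))"
proof (cases "finite {..<L}")
  case True
  define z where "z = Max {..<L}"
  have ne: "{..<L} \<noteq> {}" using assms by auto
  have z: "z < L" "\<forall>y<L. y \<le> z" using Max_in[OF True ne] Max_ge[OF True] unfolding z_def by auto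
  have "{..<z} \<subseteq> {..<L}" using z(1) by auto
  then have fz: "finite {..<z}" using True by (rule finite_subset)
  show ?thesis
  proof (intro exI[of _ z] exI[of _ "card {..<z}"] conjI allI impI)
    show "z < L" using z by simp
    show "a1 \<le> z" using z assms by simp
    fix a F assume a: "z \<le> a \<and> a < L" and F: "finite F \<and> F \<subseteq> {..<a} \<and> card F \<le> B"
    have "a = z" using a z by (meson antisym)
    then show "\<exists>F'. F \<subseteq> F' \<and> F' \<subseteq> {..<a} \<and> finite F' \<and> card F' = card {..<z}"
      using F fz by blast
  qed
next
  case False
  obtain S where S: "finite S" "card S = Suc B" "S \<subseteq> {..<L}"
    using infinite_arbitrarily_large[OF False] by blast
  have Sne: "S \<noteq> {}" using S by auto
  define z where "z = max a1 (Max S)"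
  have zL: "z < L" using Max_in[OF S(1) Sne] S(3) assms unfolding z_def by auto
  define S' where "S' = S - {Max S}"
  have S': "finite S'" "card S' = B" "S' \<subseteq> {..<z}"
  proof -
    show "finite S'" using S unfolding S'_def by auto
    show "card S' = B" using S Max_in[OF S(1) Sne] unfolding S'_def by simp
    show "S' \<subseteq> {..<z}"
    proof
      fix y assume "y \<in> S'"
      then have "y \<in> S" "y \<noteq> Max S" unfolding S'_def by auto
      then have "y < Max S" using Max_ge[OF S(1)] by (meson order.order_iff_strict)
      then show "y \<in> {..<z}" unfolding z_def by (simp add: less_max_iff_disj)
    qed
  qed
  show ?thesis
  proof (intro exI[of _ z] exI[of _ B] conjI allI impI)
    show "z < L" by (rule zL)
    show "a1 \<le> z" unfolding z_def by (simp add: le_max_iff_disj)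
    fix a F assume a: "z \<le> a \<and> a < L" and F: "finite F \<and> F \<subseteq> {..<a} \<and> card F \<le> B"
    have "S' \<subseteq> {..<a}" using S'(3) a by auto
    then show "\<exists>F'. F \<subseteq> F' \<and> F' \<subseteq> {..<a} \<and> finite F' \<and> card F' = B"
      using pad[of F S' "{..<a}" B] F S' by auto
  qed
qed



theorem proposition5p10:
  fixes n :: nat and L :: "nat \<Rightarrow> 'a::wellorder"
    and W :: "((nat \<Rightarrow> 'a) \<Rightarrow> (nat \<Rightarrow> 'a)) set"
  assumes nonzero: "\<forall>i < n. \<exists>x. x < L i"
    and cf: "\<forall>i < n. \<not> cofinality_omega (L i)"
    and W_open: "colim_open (ord_prod n L) W"
    and id_W: "id \<in> W"
  shows "\<exists>(m :: nat \<Rightarrow> nat) \<alpha>1. \<alpha>1 \<in> topspace (ord_prod n L) \<and>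
    (\<forall>\<alpha> \<in> topspace (ord_prod n L). (\<forall>i < n. \<alpha>1 i \<le> \<alpha> i) \<longrightarrow>
       (\<exists>F :: nat \<Rightarrow> 'a set.
          (\<forall>i < n. F i \<subseteq> {..<\<alpha> i} \<and> finite (F i) \<and> card (F i) = m i) \<and>
          U_part n L \<alpha> (grid n \<alpha> F) \<subseteq> W \<inter> Homeo_K (ord_prod n L) (down n \<alpha>)))"
proof -
  let ?X = "ord_prod n L"
  define G where "G = (\<lambda>\<alpha> B. \<exists>F. (\<forall>i<n. finite (F i) \<and> F i \<subseteq> {..<\<alpha> i} \<and> card (F i) \<le> B) \<and>
       U_part n L \<alpha> (grid n \<alpha> F) \<subseteq> W)"
  have topI: "(\<lambda>i. if i < n then f i else undefined) \<in> topspace ?X" if "\<forall>i<n. f i < L i" for f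
    using that unfolding X_top by (auto simp: PiE_iff extensional_def)
  have topD: "\<alpha> i < L i" if "\<alpha> \<in> topspace ?X" "i < n" for \<alpha> i
    using that unfolding X_top by (auto simp: PiE_iff)
  have UH: "U_part n L \<alpha> A \<subseteq> Homeo_K ?X (down n \<alpha>)" for \<alpha> A unfolding U_part_def by blast
  have G1: "\<exists>B. G \<alpha> B" if \<alpha>: "\<alpha> \<in> topspace ?X" for \<alpha>
  proof -
    have "compactin ?X (down n \<alpha>)" using \<alpha> by (rule down_compact)
    then have op: "openin (compact_open_top ?X (Homeo_K ?X (down n \<alpha>))) (W \<inter> Homeo_K ?X (down n \<alpha>))"
      using W_open unfolding colim_open_def by blast
    have "id \<in> Homeo_K ?X (down n \<alpha>)" unfolding Homeo_K_def by simp
    then have "id \<in> W \<inter> Homeo_K ?X (down n \<alpha>)" using id_W by blast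
    then obtain F where F: "\<forall>i<n. finite (F i) \<and> F i \<subseteq> {..<\<alpha> i}"
      "U_part n L \<alpha> (grid n \<alpha> F) \<subseteq> W \<inter> Homeo_K ?X (down n \<alpha>)"
      using good_exists[OF \<alpha> op] by blast
    have "card (F i) \<le> (\<Sum>j<n. card (F j))" if "i < n" for i
      by (rule member_le_sum) (use that in auto)
    then have "G \<alpha> (\<Sum>j<n. card (F j))" unfolding G_def using F by blast
    then show ?thesis by blast
  qed
  have G2: "G \<alpha> B" if le: "\<forall>i<n. \<alpha> i \<le> \<beta> i" and gb: "G \<beta> B" for \<alpha> \<beta> B
  proof -
    obtain F where F: "\<forall>i<n. finite (F i) \<and> F i \<subseteq> {..<\<beta> i} \<and> card (F i) \<le> B"
      "U_part n L \<beta> (grid n \<beta> F) \<subseteq> W" using gb unfolding G_def by blast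
    define F' where "F' = (\<lambda>i. F i \<inter> {..<\<alpha> i})"
    have F': "\<forall>i<n. finite (F' i) \<and> F' i \<subseteq> {..<\<alpha> i} \<and> card (F' i) \<le> B"
    proof (intro allI impI conjI)
      fix i assume i: "i < n"
      show "finite (F' i)" using F(1) i unfolding F'_def by auto
      show "F' i \<subseteq> {..<\<alpha> i}" unfolding F'_def by auto
      have "card (F' i) \<le> card (F i)" using F(1) i unfolding F'_def by (intro card_mono) auto
      moreover have "card (F i) \<le> B" using F(1) i by blast
      ultimately show "card (F' i) \<le> B" by (rule order.trans)
    qed
    have "U_part n L \<alpha> (grid n \<alpha> F') \<subseteq> U_part n L \<beta> (grid n \<beta> F)"
      by (rule refine) (use le F(1) F' in \<open>auto simp: F'_def\<close>)
    then have "U_part n L \<alpha> (grid n \<alpha> F') \<subseteq> W" using F(2) by blast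
    then show ?thesis unfolding G_def using F' by blast
  qed
  have G3: "\<exists>\<alpha>1\<in>topspace ?X. \<exists>B. \<forall>\<alpha>\<in>topspace ?X. (\<forall>i<n. \<alpha>1 i \<le> \<alpha> i) \<longrightarrow> G \<alpha> B"
  proof (rule ccontr)
    assume neg: "\<not> (\<exists>\<alpha>1\<in>topspace ?X. \<exists>B. \<forall>\<alpha>\<in>topspace ?X. (\<forall>i<n. \<alpha>1 i \<le> \<alpha> i) \<longrightarrow> G \<alpha> B)"
    define x0 where "x0 = (\<lambda>i. if i < n then (SOME x. x < L i) else undefined)"
    have "\<forall>i<n. (SOME x. x < L i) < L i"
    proof (intro allI impI)
      fix i assume "i < n"
      then have "\<exists>x. x < L i" using nonzero by blast
      then show "(SOME x. x < L i) < L i" by (rule someI_ex)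
    qed
    then have x0: "x0 \<in> topspace ?X" unfolding x0_def by (rule topI)
    have "\<forall>B. \<exists>\<alpha>. \<alpha> \<in> topspace ?X \<and> \<not> G \<alpha> B"
    proof
      fix B show "\<exists>\<alpha>. \<alpha> \<in> topspace ?X \<and> \<not> G \<alpha> B"
      proof (rule ccontr)
        assume "\<not> (\<exists>\<alpha>. \<alpha> \<in> topspace ?X \<and> \<not> G \<alpha> B)"
        then have "\<forall>\<alpha>\<in>topspace ?X. (\<forall>i<n. x0 i \<le> \<alpha> i) \<longrightarrow> G \<alpha> B" by blast
        then have "\<exists>\<alpha>1\<in>topspace ?X. \<exists>B. \<forall>\<alpha>\<in>topspace ?X. (\<forall>i<n. \<alpha>1 i \<le> \<alpha> i) \<longrightarrow> G \<alpha> B"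
          using x0 by blast
        then show False using neg by simp
      qed
    qed
    then have "\<exists>s. \<forall>B. s B \<in> topspace ?X \<and> \<not> G (s B) B" by (rule choice)
    then obtain s where s: "\<forall>B. s B \<in> topspace ?X \<and> \<not> G (s B) B" by blast
    have "\<forall>i. \<exists>b. i < n \<longrightarrow> b < L i \<and> (\<forall>k. s k i \<le> b)"
    proof
      fix i
      show "\<exists>b. i < n \<longrightarrow> b < L i \<and> (\<forall>k. s k i \<le> b)"
      proof (cases "i < n")
        case True
        have "\<forall>k. s k i < L i" using s topD True by blast
        moreover have "\<not> cofinality_omega (L i)" using cf True by blast
        ultimately have "\<exists>b<L i. \<forall>k. s k i \<le> b" by (rule bounded_seq)
        then obtain b where "b < L i" "\<forall>k. s k i \<le> b" by blast
        then show ?thesis by blast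
      qed simp
    qed
    then have "\<exists>bb. \<forall>i. i < n \<longrightarrow> bb i < L i \<and> (\<forall>k. s k i \<le> bb i)" by (rule choice)
    then obtain bb where bb: "\<forall>i. i < n \<longrightarrow> bb i < L i \<and> (\<forall>k. s k i \<le> bb i)" by blast
    define \<beta> where "\<beta> = (\<lambda>i. if i < n then bb i else undefined)"
    have \<beta>: "\<beta> \<in> topspace ?X" unfolding \<beta>_def by (rule topI) (use bb in blast)
    obtain B where "G \<beta> B" using G1[OF \<beta>] by blast
    moreover have "\<forall>i<n. s B i \<le> \<beta> i" using bb unfolding \<beta>_def by simp
    ultimately have "G (s B) B" using G2[of "s B" \<beta> B] by blast
    then show False using s by blast
  qed
  then obtain \<alpha>1 B where \<alpha>1: "\<alpha>1 \<in> topspace ?X" "\<forall>\<alpha>\<in>topspace ?X. (\<forall>i<n. \<alpha>1 i \<le> \<alpha> i) \<longrightarrow> G \<alpha> B"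
    by blast
  define Q where "Q = (\<lambda>i z m. z < L i \<and> \<alpha>1 i \<le> z \<and> (\<forall>a. z \<le> a \<and> a < L i \<longrightarrow>
     (\<forall>F. finite F \<and> F \<subseteq> {..<a} \<and> card F \<le> B \<longrightarrow> (\<exists>F'. F \<subseteq> F' \<and> F' \<subseteq> {..<a} \<and> finite F' \<and> card F' = m))))"
  have "\<forall>i. \<exists>z. \<exists>m. i < n \<longrightarrow> Q i z m"
  proof
    fix i show "\<exists>z m. i < n \<longrightarrow> Q i z m"
    proof (cases "i < n")
      case True
      have "\<alpha>1 i < L i" using topD[OF \<alpha>1(1) True] .
      then have "\<exists>z m. Q i z m" unfolding Q_def by (rule coord_choice)
      then show ?thesis by blast
    qed simp
  qed
  then have "\<exists>Z. \<forall>i. \<exists>m. i < n \<longrightarrow> Q i (Z i) m" by (rule choice)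
  then obtain Z where "\<forall>i. \<exists>m. i < n \<longrightarrow> Q i (Z i) m" by blast
  then have "\<exists>M. \<forall>i. i < n \<longrightarrow> Q i (Z i) (M i)" by (rule choice)
  then obtain M where ZM: "\<forall>i. i < n \<longrightarrow> Q i (Z i) (M i)" by blast
  have QD: "z < L i" "\<alpha>1 i \<le> z" if "Q i z m" for i z m
    using that unfolding Q_def by auto
  have QE: "\<exists>F'. F \<subseteq> F' \<and> F' \<subseteq> {..<a} \<and> finite F' \<and> card F' = m"
    if "Q i z m" "z \<le> a" "a < L i" "finite F" "F \<subseteq> {..<a}" "card F \<le> B" for i z m a F
  proof -
    have "\<forall>a. z \<le> a \<and> a < L i \<longrightarrow>
     (\<forall>F. finite F \<and> F \<subseteq> {..<a} \<and> card F \<le> B \<longrightarrow> (\<exists>F'. F \<subseteq> F' \<and> F' \<subseteq> {..<a} \<and> finite F' \<and> card F' = m))"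
      using that(1) unfolding Q_def by (elim conjE)
    then show ?thesis using that(2-6) by blast
  qed
  define \<alpha>1' where "\<alpha>1' = (\<lambda>i. if i < n then Z i else undefined)"
  have \<alpha>1': "\<alpha>1' \<in> topspace ?X" unfolding \<alpha>1'_def by (rule topI) (use ZM QD in blast)
  show ?thesis
  proof (intro exI[of _ M] exI[of _ \<alpha>1'] conjI ballI impI)
    show "\<alpha>1' \<in> topspace ?X" by (rule \<alpha>1')
    fix \<alpha> assume \<alpha>: "\<alpha> \<in> topspace ?X" and ge: "\<forall>i<n. \<alpha>1' i \<le> \<alpha> i"
    have "\<forall>i<n. \<alpha>1 i \<le> \<alpha> i"
    proof (intro allI impI)
      fix i assume i: "i < n"
      have "\<alpha>1 i \<le> Z i" using ZM i QD by blast
      moreover have "Z i \<le> \<alpha> i" using ge i unfolding \<alpha>1'_def by simp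
      ultimately show "\<alpha>1 i \<le> \<alpha> i" by (rule order.trans)
    qed
    then have "G \<alpha> B" using \<alpha>1(2) \<alpha> by blast
    then obtain F where F: "\<forall>i<n. finite (F i) \<and> F i \<subseteq> {..<\<alpha> i} \<and> card (F i) \<le> B"
      "U_part n L \<alpha> (grid n \<alpha> F) \<subseteq> W" unfolding G_def by blast
    have "\<forall>i. \<exists>F'. i < n \<longrightarrow> F i \<subseteq> F' \<and> F' \<subseteq> {..<\<alpha> i} \<and> finite F' \<and> card F' = M i"
    proof
      fix i show "\<exists>F'. i < n \<longrightarrow> F i \<subseteq> F' \<and> F' \<subseteq> {..<\<alpha> i} \<and> finite F' \<and> card F' = M i"
      proof (cases "i < n")
        case True
        have q: "Q i (Z i) (M i)" using ZM True by blast
        have "Z i \<le> \<alpha> i \<and> \<alpha> i < L i" using ge True topD[OF \<alpha> True] unfolding \<alpha>1'_def by simp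
        moreover have "finite (F i) \<and> F i \<subseteq> {..<\<alpha> i} \<and> card (F i) \<le> B" using F(1) True by blast
        ultimately have "\<exists>F'. F i \<subseteq> F' \<and> F' \<subseteq> {..<\<alpha> i} \<and> finite F' \<and> card F' = M i"
          using QE[OF q] by blast
        then show ?thesis by blast
      qed simp
    qed
    then have "\<exists>F'. \<forall>i. i < n \<longrightarrow> F i \<subseteq> F' i \<and> F' i \<subseteq> {..<\<alpha> i} \<and> finite (F' i) \<and> card (F' i) = M i"
      by (rule choice)
    then obtain F' where F': "\<forall>i. i < n \<longrightarrow> F i \<subseteq> F' i \<and> F' i \<subseteq> {..<\<alpha> i} \<and> finite (F' i) \<and> card (F' i) = M i"
      by blast
    have "U_part n L \<alpha> (grid n \<alpha> F') \<subseteq> U_part n L \<alpha> (grid n \<alpha> F)"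
      by (rule refine) (use F(1) F' in auto)
    then have "U_part n L \<alpha> (grid n \<alpha> F') \<subseteq> W \<inter> Homeo_K ?X (down n \<alpha>)" using F(2) UH by blast
    moreover have "\<forall>i<n. F' i \<subseteq> {..<\<alpha> i} \<and> finite (F' i) \<and> card (F' i) = M i" using F' by blast
    ultimately show "\<exists>F. (\<forall>i<n. F i \<subseteq> {..<\<alpha> i} \<and> finite (F i) \<and> card (F i) = M i) \<and>
          U_part n L \<alpha> (grid n \<alpha> F) \<subseteq> W \<inter> Homeo_K ?X (down n \<alpha>)" by blast
  qed
qed


end
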